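(* Let $f_1,f_2,g_1,g_2:\mathbb R^n\to\mathbb R$ be convex and positively one-homogeneous with $g_1(x)-g_2(x)\ge0$ for all $x$, and let $r(x)=\frac{f_1(x)-f_2(x)}{g_1(x)-g_2(x)}$. Consider the generalized RatioDCA iteration: start from $x_0$ with $\|x_0\|_2=1$, $\lambda_0=r(x_0)$; given $x_k$ and $\lambda_k=r(x_k)$: if $\lambda_k\ge0$, pick $F_2\in\partial f_2(x_k)$, $G_1\in\partial g_1(x_k)$ and let $x_{k+1}$ be a minimizer over $\{\xi:\|\xi\|_2\le1\}$ of $f_1(\xi)-\langle\xi,F_2\rangle+\lambda_k\big(g_2(\xi)-\langle\xi,G_1\rangle\big)$; if $\lambda_k<0$, pick $F_2\in\partial f_2(x_k)$, $G_2\in\partial g_2(x_k)$ and let $x_{k+1}$ be a minimizer over $\{\xi:\|\xi\|_2\le1\}$ of $g_1(\xi)-\langle\xi,G_2\rangle+\frac1{\lambda_k}\big(\langle\xi,F_2\rangle-f_1(\xi)\big)$; then set $\lambda_{k+1}=r(x_{k+1})$. Assume the iteration is well defined, i.e. $g_1(x_k)-g_2(x_k)>0$ for all $k$. Then for each $k$, either $\lambda_{k+1}<\lambda_k$, or $\lambda_{k+1}=\lambda_k$ (so the method terminates) and $\lambda_{k+1}$ is a nonlinear eigenvalue of $r$ with nonlinear eigenvector $x_{k+1}$.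
   Context: $\partial$ denotes the subdifferential of a convex function; $\langle\cdot,\cdot\rangle$ the Euclidean inner product. A real $\lambda$ is a nonlinear eigenvalue of $r$ with nonlinear eigenvector $x$ if $0\in\partial f_1(x)-\partial f_2(x)-\lambda\big(\partial g_1(x)-\partial g_2(x)\big)$ (Minkowski sums/differences of sets). The method is stopped when the relative change of $\lambda_k$ falls below a tolerance; in particular it terminates when $\lambda_{k+1}=\lambda_k$. *)

theory Defs
  imports "HOL-Analysis.Analysis"
begin

definition subdiff :: "('a::real_inner \<Rightarrow> real) \<Rightarrow> 'a \<Rightarrow> 'a set" where
  "subdiff f x = {s. \<forall>y. f y \<ge> f x + inner s (y - x)}"

definition pos_homogeneous :: "('a::real_vector \<Rightarrow> real) \<Rightarrow> bool" where
  "pos_homogeneous f \<longleftrightarrow> (\<forall>x. \<forall>t::real. t \<ge> 0 \<longrightarrow> f (t *\<^sub>R x) = t * f x)"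

definition ratio :: "('a \<Rightarrow> real) \<Rightarrow> ('a \<Rightarrow> real) \<Rightarrow> ('a \<Rightarrow> real) \<Rightarrow> ('a \<Rightarrow> real) \<Rightarrow> 'a \<Rightarrow> real" where
  "ratio f1 f2 g1 g2 x = (f1 x - f2 x) / (g1 x - g2 x)"

text \<open>Nonlinear eigenvalue: 0 \<in> df1(x) - df2(x) - lam (dg1(x) - dg2(x)), Minkowski sums unfolded.\<close>
definition nonlinear_eigen ::
  "('a::real_inner \<Rightarrow> real) \<Rightarrow> ('a \<Rightarrow> real) \<Rightarrow> ('a \<Rightarrow> real) \<Rightarrow> ('a \<Rightarrow> real) \<Rightarrow> real \<Rightarrow> 'a \<Rightarrow> bool" where
  "nonlinear_eigen f1 f2 g1 g2 lam x \<longleftrightarrow>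
     (\<exists>a\<in>subdiff f1 x. \<exists>b\<in>subdiff f2 x. \<exists>c\<in>subdiff g1 x. \<exists>d\<in>subdiff g2 x.
        a - b - lam *\<^sub>R (c - d) = 0)"

end

theory Submission
  imports Defs
begin

lemma hom0: "pos_homogeneous p \<Longrightarrow> p 0 = 0"
  unfolding pos_homogeneous_def by (metis mult_zero_left order_refl scaleR_zero_left)

lemma sandwich:
  fixes p h :: "'a::euclidean_space \<Rightarrow> real"
  assumes cp: "convex_on UNIV p" and hp: "pos_homogeneous p" and ch: "convex_on UNIV h"
    and cC: "convex C" and ne: "C \<noteq> {}" and le: "\<forall>z\<in>C. inner v z - h z \<le> p z"
  shows "\<exists>a. (\<forall>z. inner a z \<le> p z) \<and> (\<forall>z\<in>C. inner v z - h z \<le> inner a z)"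
proof -
  define S where "S = epigraph UNIV p"
  define T where "T = {(z,t). z\<in>C \<and> t < inner v z - h z}"
  have cS: "convex S" unfolding S_def using cp convex_epigraph by blast
  have cT: "convex T" unfolding convex_def
  proof (intro ballI allI impI)
    fix x y and u w :: real
    assume x: "x \<in> T" and y: "y \<in> T" and u: "0 \<le> u" and w: "0 \<le> w" and uw: "u + w = 1"
    obtain z1 t1 z2 t2 where xy: "x = (z1,t1)" "y = (z2,t2)" by fastforce
    have z1: "z1 \<in> C" and t1: "t1 < inner v z1 - h z1" using x xy unfolding T_def by auto
    have z2: "z2 \<in> C" and t2: "t2 < inner v z2 - h z2" using y xy unfolding T_def by auto
    have zC: "u *\<^sub>R z1 + w *\<^sub>R z2 \<in> C" using cC z1 z2 u w uw unfolding convex_def by blast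
    have hc: "h (u *\<^sub>R z1 + w *\<^sub>R z2) \<le> u * h z1 + w * h z2"
    proof -
      have uu: "1 - w = u" using uw by simp
      show ?thesis using convex_onD[OF ch, of w z1 z2] u w uw unfolding uu by simp
    qed
    have "u * t1 + w * t2 < u * (inner v z1 - h z1) + w * (inner v z2 - h z2)"
    proof (cases "u = 0")
      case True then show ?thesis using uw t2 by simp
    next
      case False then have "u > 0" using u by simp
      then have "u * t1 < u * (inner v z1 - h z1)" using t1 by simp
      moreover have "w * t2 \<le> w * (inner v z2 - h z2)" using t2 w by (simp add: mult_left_mono)
      ultimately show ?thesis by linarith
    qed
    also have "\<dots> \<le> inner v (u *\<^sub>R z1 + w *\<^sub>R z2) - h (u *\<^sub>R z1 + w *\<^sub>R z2)"
      using hc by (simp add: inner_add_right algebra_simps)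
    finally show "u *\<^sub>R x + w *\<^sub>R y \<in> T" using zC xy unfolding T_def by simp
  qed
  have Sne: "S \<noteq> {}" unfolding S_def epigraph_def by auto
  obtain c0 where "c0 \<in> C" using ne by auto
  then have Tne: "T \<noteq> {}" unfolding T_def
    by (auto intro!: exI[of _ c0] exI[of _ "inner v c0 - h c0 - 1"])
  have disj: "S \<inter> T = {}" unfolding S_def T_def epigraph_def using le by fastforce
  obtain a b where a0: "a \<noteq> 0" and aS: "\<forall>x\<in>S. inner a x \<le> b" and aT: "\<forall>x\<in>T. inner a x \<ge> b"
    using separating_hyperplane_sets[OF cS cT Sne Tne disj] by blast
  obtain w c where wc: "a = (w, c)" by fastforce
  have Sin: "(z, t) \<in> S \<longleftrightarrow> p z \<le> t" for z t unfolding S_def epigraph_def by simp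
  have b0: "0 \<le> b" using aS Sin[of 0 0] hom0[OF hp] wc by auto
  have Sle: "inner w z + c * t \<le> 0" if "p z \<le> t" for z t
  proof (rule ccontr)
    assume neg: "\<not> ?thesis"
    define s where "s = (b + 1) / (inner w z + c * t)"
    have s0: "s > 0" using neg b0 unfolding s_def by simp
    have "p (s *\<^sub>R z) = s * p z" using hp s0 unfolding pos_homogeneous_def by simp
    also have "\<dots> \<le> s * t" using that s0 by simp
    finally have "inner a (s *\<^sub>R z, s * t) \<le> b" using aS Sin by blast
    then have "s * (inner w z + c * t) \<le> b" using wc by (simp add: algebra_simps)
    moreover have "s * (inner w z + c * t) = b + 1" using neg unfolding s_def by simp
    ultimately show False by simp
  qed
  have c_le: "c \<le> 0" using Sle[of 0 1] hom0[OF hp] by simp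
  have c_ne: "c \<noteq> 0"
  proof
    assume c: "c = 0"
    then have "inner w w \<le> 0" using Sle[of w "p w"] by simp
    then have "w = 0" by (meson inner_gt_zero_iff not_less)
    then show False using a0 wc c by (simp add: zero_prod_def)
  qed
  then have cneg: "c < 0" using c_le by simp
  define a' where "a' = (- 1 / c) *\<^sub>R w"
  have ia: "inner a' z = inner w z / (- c)" for z unfolding a'_def by simp
  have "\<forall>z. inner a' z \<le> p z"
  proof
    fix z
    have "inner w z \<le> - c * p z" using Sle[of z "p z"] by simp
    moreover have mc: "- c > 0" using cneg by simp
    ultimately have "inner w z / (- c) \<le> p z" by (simp only: pos_divide_le_eq[OF mc] mult.commute)
    then show "inner a' z \<le> p z" unfolding ia .
  qed
  moreover have "\<forall>z\<in>C. inner v z - h z \<le> inner a' z"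
  proof (intro ballI)
    fix z assume z: "z \<in> C"
    have "t \<le> inner a' z" if "t < inner v z - h z" for t
    proof -
      have "(z,t) \<in> T" using z that unfolding T_def by simp
      then have "b \<le> inner w z + c * t" using aT wc by auto
      then have "- c * t \<le> inner w z" using b0 by simp
      moreover have mc: "- c > 0" using cneg by simp
      ultimately have "t \<le> inner w z / (- c)" by (simp only: pos_le_divide_eq[OF mc] mult.commute)
      then show ?thesis unfolding ia .
    qed
    then show "inner v z - h z \<le> inner a' z"
      by (metis dense_le)
  qed
  ultimately show ?thesis by blast
qed
lemma subdiff_hom:
  assumes hp: "pos_homogeneous p"
  shows "s \<in> subdiff p y \<longleftrightarrow> (\<forall>z. inner s z \<le> p z) \<and> inner s y = p y"
proof
  assume s: "s \<in> subdiff p y"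
  have p0: "p 0 = 0" using hom0[OF hp] .
  have p2: "p (2 *\<^sub>R y) = 2 * p y" using hp unfolding pos_homogeneous_def by simp
  have "p 0 \<ge> p y + inner s (0 - y)" using s unfolding subdiff_def by blast
  moreover have "p (2 *\<^sub>R y) \<ge> p y + inner s (2 *\<^sub>R y - y)" using s unfolding subdiff_def by blast
  ultimately have eq: "inner s y = p y" using p0 p2 by (simp add: inner_diff_right algebra_simps)
  have "inner s z \<le> p z" for z
    using s eq unfolding subdiff_def by (force simp: inner_diff_right)
  then show "(\<forall>z. inner s z \<le> p z) \<and> inner s y = p y" using eq by blast
next
  assume "(\<forall>z. inner s z \<le> p z) \<and> inner s y = p y"
  then show "s \<in> subdiff p y" unfolding subdiff_def by (auto simp: inner_diff_right)
qed

lemma subdiff_nonempty: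
  fixes g :: "'a::euclidean_space \<Rightarrow> real"
  assumes cg: "convex_on UNIV g" and hg: "pos_homogeneous g"
  shows "\<exists>c. c \<in> subdiff g y"
proof -
  define v where "v = (if y = 0 then 0 else (g y / inner y y) *\<^sub>R y)"
  have vy: "inner v y = g y"
    using hom0[OF hg] unfolding v_def by auto
  have ch: "convex_on UNIV (\<lambda>z. 0::real)" by (simp add: convex_on_const)
  obtain a where a1: "\<forall>z. inner a z \<le> g z" and a2: "\<forall>z\<in>{y}. inner v z - 0 \<le> inner a z"
    using sandwich[OF cg hg ch convex_singleton, of y v] vy by auto
  have "inner a y = g y" using a1[rule_format, of y] a2 vy by simp
  then show ?thesis using subdiff_hom[OF hg] a1 by blast
qed

lemma ball_global:
  fixes P :: "'a::real_normed_vector \<Rightarrow> real"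
  assumes hP: "pos_homogeneous P" and b: "\<forall>\<xi>. norm \<xi> \<le> 1 \<longrightarrow> 0 \<le> P \<xi>"
  shows "0 \<le> P z"
proof (cases "z = 0")
  case True then show ?thesis using hom0[OF hP] by simp
next
  case False
  define u where "u = (1 / norm z) *\<^sub>R z"
  have "norm u \<le> 1" unfolding u_def using False by simp
  then have "0 \<le> P u" using b by blast
  moreover have "z = norm z *\<^sub>R u" unfolding u_def using False by simp
  then have "P z = norm z * P u" using hP unfolding pos_homogeneous_def by (metis norm_ge_zero)
  ultimately show ?thesis by simp
qed

lemma hom_comb1:
  assumes "pos_homogeneous f" "pos_homogeneous g"
  shows "pos_homogeneous (\<lambda>z. f z - inner z F + l * (g z - inner z G))"
  using assms unfolding pos_homogeneous_def by (simp add: algebra_simps)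

lemma hom_comb2:
  assumes "pos_homogeneous f" "pos_homogeneous g"
  shows "pos_homogeneous (\<lambda>z. g z - inner z G + m * (inner z F - f z))"
  using assms unfolding pos_homogeneous_def by (simp add: algebra_simps)

theorem theorem4p1:
  fixes f1 f2 g1 g2 :: "'a::euclidean_space \<Rightarrow> real"
    and x F2 G1 G2 :: "nat \<Rightarrow> 'a"
  assumes conv: "convex_on UNIV f1" "convex_on UNIV f2" "convex_on UNIV g1" "convex_on UNIV g2"
    and hom: "pos_homogeneous f1" "pos_homogeneous f2" "pos_homogeneous g1" "pos_homogeneous g2"
    and denom_nonneg: "\<And>y. g1 y - g2 y \<ge> 0"
    and init: "norm (x 0) = 1"
    and F2: "\<And>k. F2 k \<in> subdiff f2 (x k)"
    and step_pos: "\<And>k. ratio f1 f2 g1 g2 (x k) \<ge> 0 \<Longrightarrow>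
         G1 k \<in> subdiff g1 (x k) \<and> norm (x (Suc k)) \<le> 1 \<and>
         (\<forall>\<xi>. norm \<xi> \<le> 1 \<longrightarrow>
            f1 (x (Suc k)) - inner (x (Suc k)) (F2 k)
              + ratio f1 f2 g1 g2 (x k) * (g2 (x (Suc k)) - inner (x (Suc k)) (G1 k))
            \<le> f1 \<xi> - inner \<xi> (F2 k) + ratio f1 f2 g1 g2 (x k) * (g2 \<xi> - inner \<xi> (G1 k)))"
    and step_neg: "\<And>k. ratio f1 f2 g1 g2 (x k) < 0 \<Longrightarrow>
         G2 k \<in> subdiff g2 (x k) \<and> norm (x (Suc k)) \<le> 1 \<and>
         (\<forall>\<xi>. norm \<xi> \<le> 1 \<longrightarrow>
            g1 (x (Suc k)) - inner (x (Suc k)) (G2 k)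
              + (1 / ratio f1 f2 g1 g2 (x k)) * (inner (x (Suc k)) (F2 k) - f1 (x (Suc k)))
            \<le> g1 \<xi> - inner \<xi> (G2 k) + (1 / ratio f1 f2 g1 g2 (x k)) * (inner \<xi> (F2 k) - f1 \<xi>))"
    and well_def: "\<And>k. g1 (x k) - g2 (x k) > 0"
  shows "\<forall>k. ratio f1 f2 g1 g2 (x (Suc k)) < ratio f1 f2 g1 g2 (x k) \<or>
             (ratio f1 f2 g1 g2 (x (Suc k)) = ratio f1 f2 g1 g2 (x k) \<and>
              nonlinear_eigen f1 f2 g1 g2 (ratio f1 f2 g1 g2 (x (Suc k))) (x (Suc k)))"
  proof
  fix k
  define r where "r = ratio f1 f2 g1 g2"
  define l where "l = r (x k)"
  define X where "X = x k"
  define y where "y = x (Suc k)"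
  have rdef: "r z = (f1 z - f2 z) / (g1 z - g2 z)" for z unfolding r_def ratio_def by simp
  have DX: "g1 X - g2 X > 0" using well_def unfolding X_def by simp
  have Dy: "g1 y - g2 y > 0" using well_def unfolding y_def by simp
  have NX: "f1 X - f2 X = l * (g1 X - g2 X)" using DX unfolding l_def X_def rdef by simp
  have ry: "r y = l \<longleftrightarrow> f1 y - f2 y = l * (g1 y - g2 y)" using Dy unfolding rdef
    by (simp add: field_simps)
  have ry2: "r y < l \<longleftrightarrow> f1 y - f2 y < l * (g1 y - g2 y)" using Dy unfolding rdef
    by (simp add: field_simps)
  have nX: "norm X \<le> 1"
  proof (cases k)
    case 0 then show ?thesis using init unfolding X_def by simp
  next
    case (Suc j)
    then show ?thesis using step_pos[of j] step_neg[of j] unfolding X_def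
      by (cases "ratio f1 f2 g1 g2 (x j) \<ge> 0") auto
  qed
  have F2c: "(\<forall>z. inner (F2 k) z \<le> f2 z) \<and> inner (F2 k) X = f2 X"
    using F2[of k] subdiff_hom[OF hom(2)] unfolding X_def by blast
  have goal: "r y < l \<or> (r y = l \<and> nonlinear_eigen f1 f2 g1 g2 l y)"
  proof (cases "l \<ge> 0")
    case True
    have sp: "G1 k \<in> subdiff g1 X \<and> norm y \<le> 1 \<and>
         (\<forall>\<xi>. norm \<xi> \<le> 1 \<longrightarrow>
            f1 y - inner y (F2 k) + l * (g2 y - inner y (G1 k))
            \<le> f1 \<xi> - inner \<xi> (F2 k) + l * (g2 \<xi> - inner \<xi> (G1 k)))"
      using step_pos[of k] True unfolding l_def X_def y_def r_def by blast
    define \<Phi> where "\<Phi> = (\<lambda>z. f1 z - inner z (F2 k) + l * (g2 z - inner z (G1 k)))"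
    have G1c: "(\<forall>z. inner (G1 k) z \<le> g1 z) \<and> inner (G1 k) X = g1 X"
      using sp subdiff_hom[OF hom(3)] by blast
    have PX: "\<Phi> X = 0" unfolding \<Phi>_def using F2c G1c NX by (simp add: inner_commute algebra_simps)
    have Pmin: "\<forall>\<xi>. norm \<xi> \<le> 1 \<longrightarrow> \<Phi> y \<le> \<Phi> \<xi>" using sp unfolding \<Phi>_def by blast
    have Py: "\<Phi> y \<le> 0" using Pmin nX PX by force
    have gap1: "f2 y - inner y (F2 k) \<ge> 0" using F2c by (simp add: inner_commute)
    have gap2: "g1 y - inner y (G1 k) \<ge> 0" using G1c by (simp add: inner_commute)
    have gap2': "l * (g1 y - inner y (G1 k)) \<ge> 0" using gap2 True by simp
    have low: "\<Phi> y = (f1 y - f2 y - l * (g1 y - g2 y)) + (f2 y - inner y (F2 k)) + l * (g1 y - inner y (G1 k))"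
      unfolding \<Phi>_def by (simp add: algebra_simps)
    have "f1 y - f2 y \<le> l * (g1 y - g2 y)" using low Py gap1 gap2' by linarith
    then have "r y < l \<or> r y = l" using ry ry2 by linarith
    moreover have "nonlinear_eigen f1 f2 g1 g2 l y" if req: "r y = l"
    proof -
      have N: "f1 y - f2 y = l * (g1 y - g2 y)" using ry req by simp
      have Py0: "\<Phi> y = 0" and gF: "f2 y = inner y (F2 k)" and gG: "l * (g1 y - inner y (G1 k)) = 0"
        using low Py gap1 gap2' N by linarith+
      have Pg: "0 \<le> \<Phi> z" for z
      proof -
        have h: "pos_homogeneous \<Phi>" unfolding \<Phi>_def by (rule hom_comb1[OF hom(1) hom(4)])
        have b: "\<forall>\<xi>. norm \<xi> \<le> 1 \<longrightarrow> 0 \<le> \<Phi> \<xi>" using Pmin Py0 by force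
        show ?thesis by (rule ball_global[OF h b])
      qed
      have bF: "F2 k \<in> subdiff f2 y" using subdiff_hom[OF hom(2)] F2c gF
        by (simp add: inner_commute)
      show ?thesis
      proof (cases "l = 0")
        case True
        have "F2 k \<in> subdiff f1 y"
          unfolding subdiff_hom[OF hom(1)]
        proof
          show "\<forall>z. inner (F2 k) z \<le> f1 z" using Pg True unfolding \<Phi>_def by (simp add: inner_commute)
          show "inner (F2 k) y = f1 y" using Py0 True unfolding \<Phi>_def by (simp add: inner_commute)
        qed
        moreover obtain c where "c \<in> subdiff g1 y" using subdiff_nonempty[OF conv(3) hom(3)] by blast
        moreover obtain d where "d \<in> subdiff g2 y" using subdiff_nonempty[OF conv(4) hom(4)] by blast
        ultimately show ?thesis unfolding nonlinear_eigen_def using bF True by force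
      next
        case False
        then have lpos: "l > 0" using True by simp
        have gG': "g1 y = inner y (G1 k)" using gG False by simp
        have cG: "G1 k \<in> subdiff g1 y" using subdiff_hom[OF hom(3)] G1c gG'
          by (simp add: inner_commute)
        define v where "v = F2 k + l *\<^sub>R G1 k"
        have ch: "convex_on UNIV (\<lambda>z. l * g2 z)" using convex_on_cmul[OF _ conv(4)] True by blast
        have le: "\<forall>z\<in>UNIV. inner v z - l * g2 z \<le> f1 z"
          using Pg unfolding \<Phi>_def v_def by (auto simp: inner_add_left inner_commute algebra_simps)
        obtain a where a1: "\<forall>z. inner a z \<le> f1 z" and a2: "\<forall>z\<in>UNIV. inner v z - l * g2 z \<le> inner a z"
          using sandwich[OF conv(1) hom(1) ch convex_UNIV _ le] by blast
        have vy: "inner v y - l * g2 y = f1 y"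
          using Py0 unfolding \<Phi>_def v_def by (simp add: inner_add_left inner_commute algebra_simps)
        have ay: "inner a y = f1 y" using a1 a2 vy by (metis UNIV_I antisym)
        have aS: "a \<in> subdiff f1 y" using subdiff_hom[OF hom(1)] a1 ay by blast
        define d where "d = (1 / l) *\<^sub>R (v - a)"
        have id: "inner d z = (inner v z - inner a z) / l" for z
          unfolding d_def by (simp add: inner_diff_left)
        have "d \<in> subdiff g2 y"
          unfolding subdiff_hom[OF hom(4)]
        proof
          show "\<forall>z. inner d z \<le> g2 z"
          proof
            fix z
            have "inner v z - inner a z \<le> g2 z * l" using a2[rule_format, of z] by (simp add: mult.commute)
            then show "inner d z \<le> g2 z" unfolding id by (simp only: pos_divide_le_eq[OF lpos])
          qed
          show "inner d y = g2 y" unfolding id using ay vy lpos by (simp add: field_simps)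
        qed
        moreover have "a - F2 k - l *\<^sub>R (G1 k - d) = 0"
          unfolding d_def v_def using lpos by (simp add: algebra_simps)
        ultimately show ?thesis unfolding nonlinear_eigen_def using aS bF cG by blast
      qed
    qed
    ultimately show ?thesis by blast
  next
    case False
    then have lneg: "l < 0" by simp
    define m where "m = 1 / l"
    have mneg: "m < 0" using lneg unfolding m_def by simp
    have lm: "l * m = 1" using lneg unfolding m_def by simp
    have sp: "G2 k \<in> subdiff g2 X \<and> norm y \<le> 1 \<and>
         (\<forall>\<xi>. norm \<xi> \<le> 1 \<longrightarrow>
            g1 y - inner y (G2 k) + m * (inner y (F2 k) - f1 y)
            \<le> g1 \<xi> - inner \<xi> (G2 k) + m * (inner \<xi> (F2 k) - f1 \<xi>))"
      using step_neg[of k] lneg unfolding l_def X_def y_def r_def m_def by blast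
    define \<Psi> where "\<Psi> = (\<lambda>z. g1 z - inner z (G2 k) + m * (inner z (F2 k) - f1 z))"
    have G2c: "(\<forall>z. inner (G2 k) z \<le> g2 z) \<and> inner (G2 k) X = g2 X"
      using sp subdiff_hom[OF hom(4)] by blast
    have NX': "m * (f1 X - f2 X) = g1 X - g2 X" using NX lm
      by (metis mult.assoc mult.commute mult_1)
    have PX: "\<Psi> X = 0" unfolding \<Psi>_def using F2c G2c NX' by (simp add: inner_commute algebra_simps)
    have Pmin: "\<forall>\<xi>. norm \<xi> \<le> 1 \<longrightarrow> \<Psi> y \<le> \<Psi> \<xi>" using sp unfolding \<Psi>_def by blast
    have Py: "\<Psi> y \<le> 0" using Pmin nX PX by force
    have gap1: "m * (inner y (F2 k) - f2 y) \<ge> 0" using F2c mneg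
      by (simp add: inner_commute mult_nonpos_nonpos)
    have gap2: "g2 y - inner y (G2 k) \<ge> 0" using G2c by (simp add: inner_commute)
    have low: "\<Psi> y = ((g1 y - g2 y) - m * (f1 y - f2 y)) + (g2 y - inner y (G2 k)) + m * (inner y (F2 k) - f2 y)"
      unfolding \<Psi>_def by (simp add: algebra_simps)
    have E: "(g1 y - g2 y) - m * (f1 y - f2 y) \<le> 0" using low Py gap1 gap2 by linarith
    have lmt: "l * (m * t) = t" for t using lm by (metis mult.assoc mult_1)
    have conv_l: "f1 y - f2 y - l * (g1 y - g2 y) = - l * ((g1 y - g2 y) - m * (f1 y - f2 y))"
      by (simp add: algebra_simps lmt)
    have "f1 y - f2 y \<le> l * (g1 y - g2 y)"
      using E lneg conv_l mult_nonneg_nonpos[of "- l" "(g1 y - g2 y) - m * (f1 y - f2 y)"] by simp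
    then have "r y < l \<or> r y = l" using ry ry2 by linarith
    moreover have "nonlinear_eigen f1 f2 g1 g2 l y" if req: "r y = l"
    proof -
      have N: "f1 y - f2 y = l * (g1 y - g2 y)" using ry req by simp
      have mlt: "m * (l * t) = t" for t using lm by (metis mult.assoc mult.commute mult_1)
      have E0: "(g1 y - g2 y) - m * (f1 y - f2 y) = 0"
        unfolding N mlt by simp
      have Py0: "\<Psi> y = 0" and gG: "g2 y = inner y (G2 k)" and gF: "m * (inner y (F2 k) - f2 y) = 0"
        using low Py gap1 gap2 E0 by linarith+
      have gF': "f2 y = inner y (F2 k)" using gF mneg by simp
      have Pg: "0 \<le> \<Psi> z" for z
      proof -
        have h: "pos_homogeneous \<Psi>" unfolding \<Psi>_def by (rule hom_comb2[OF hom(1) hom(3)])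
        have b: "\<forall>\<xi>. norm \<xi> \<le> 1 \<longrightarrow> 0 \<le> \<Psi> \<xi>" using Pmin Py0 by force
        show ?thesis by (rule ball_global[OF h b])
      qed
      have bF: "F2 k \<in> subdiff f2 y" using subdiff_hom[OF hom(2)] F2c gF'
        by (simp add: inner_commute)
      have dG: "G2 k \<in> subdiff g2 y" using subdiff_hom[OF hom(4)] G2c gG
        by (simp add: inner_commute)
      define v where "v = G2 k - m *\<^sub>R F2 k"
      have ch: "convex_on UNIV (\<lambda>z. (- m) * f1 z)" using convex_on_cmul[OF _ conv(1), of "- m"] mneg by simp
      have le: "\<forall>z\<in>UNIV. inner v z - (- m) * f1 z \<le> g1 z"
        using Pg unfolding \<Psi>_def v_def by (auto simp: inner_diff_left inner_commute algebra_simps)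
      obtain c where c1: "\<forall>z. inner c z \<le> g1 z" and c2: "\<forall>z\<in>UNIV. inner v z - (- m) * f1 z \<le> inner c z"
        using sandwich[OF conv(3) hom(3) ch convex_UNIV _ le] by blast
      have vy: "inner v y - (- m) * f1 y = g1 y"
        using Py0 unfolding \<Psi>_def v_def by (simp add: inner_diff_left inner_commute algebra_simps)
      have cy: "inner c y = g1 y" using c1 c2 vy by (metis UNIV_I antisym)
      have cS: "c \<in> subdiff g1 y" using subdiff_hom[OF hom(3)] c1 cy by blast
      define a where "a = F2 k + l *\<^sub>R (c - G2 k)"
      have ia: "inner a z = inner (F2 k) z + l * (inner c z - inner (G2 k) z)" for z
        unfolding a_def by (simp add: inner_add_left inner_diff_left)
      have "a \<in> subdiff f1 y"
        unfolding subdiff_hom[OF hom(1)]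
      proof
        show "\<forall>z. inner a z \<le> f1 z"
        proof
          fix z
          have h1: "inner v z + m * f1 z \<le> inner c z" using c2 by simp
          have "l * inner c z \<le> l * (inner v z + m * f1 z)"
            using mult_left_mono_neg[OF h1, of l] lneg by simp
          also have "\<dots> = l * inner (G2 k) z - inner (F2 k) z + f1 z"
            unfolding v_def by (simp add: inner_diff_left algebra_simps lmt)
          finally show "inner a z \<le> f1 z" unfolding ia by (simp add: algebra_simps)
        qed
        have "l * inner c y = l * (inner v y + m * f1 y)" using cy vy by simp
        also have "\<dots> = l * inner (G2 k) y - inner (F2 k) y + f1 y"
          unfolding v_def by (simp add: inner_diff_left algebra_simps lmt)
        finally show "inner a y = f1 y" unfolding ia by (simp add: algebra_simps)
      qed
      moreover have "a - F2 k - l *\<^sub>R (c - G2 k) = 0" unfolding a_def by simp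
      ultimately show ?thesis unfolding nonlinear_eigen_def using bF cS dG by blast
    qed
    ultimately show ?thesis by blast
  qed
  then show "ratio f1 f2 g1 g2 (x (Suc k)) < ratio f1 f2 g1 g2 (x k) \<or>
             (ratio f1 f2 g1 g2 (x (Suc k)) = ratio f1 f2 g1 g2 (x k) \<and>
              nonlinear_eigen f1 f2 g1 g2 (ratio f1 f2 g1 g2 (x (Suc k))) (x (Suc k)))"
    unfolding r_def l_def y_def by auto
qed

end
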